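(* Let $\mu=\delta\mu'+(1-\delta)\nu$ where $\mu',\nu$ are distributions on $\Sigma\times\Gamma\times\Phi$ and $\delta\in(0,1]$, and let $t:\mathsf{supp}(\mu)\to\mathcal{A}$ ($\mathcal{A}$ a finite Abelian group). Let $\mathcal{G}_\mu$ be the $3$-player $\mathsf{XOR}$ game with question distribution $\mu$ and target $t$, and $\mathcal{G}_{\mu'}$ the game with the same target and question distribution $\mu'$. Then $$\mathsf{val}(\mathcal{G}_\mu^{\otimes n})\le\mathsf{val}(\mathcal{G}_{\mu'}^{\otimes \delta n/2})+2^{-\Omega(\delta n)}.$$
   Context: In a $3$-player $\mathsf{XOR}$ game with distribution $\mu$ and target $t$, the $n$-fold repeated value is $\max_{f,g,h}\Pr_{(x,y,z)\sim\mu^{\otimes n}}[f(x)_i+g(y)_i+h(z)_i=t(x_i,y_i,z_i)\ \forall i\in[n]]$ over $f:\Sigma^n\to\mathcal{A}^n$, $g:\Gamma^n\to\mathcal{A}^n$, $h:\Phi^n\to\mathcal{A}^n$. The $\Omega(\cdot)$ hides an absolute constant. *)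

theory Defs
  imports "HOL-Probability.Probability" "HOL-Algebra.Group"
begin

text \<open>Questions are triples (x,y,z) in Sigma x Gamma x Phi, encoded in nat x nat x nat.
  The answer group A is a finite commutative group (written multiplicatively in
  HOL-Algebra, i.e. its operation plays the role of +), with carrier a set of naturals.
  An n-fold question is a function q :: nat => nat x nat x nat (coordinates i < n),
  drawn from the product distribution mu^(tensor n) = Pi_pmf {..<n} undefined (\<lambda>_. mu).
  A strategy of player 1 maps its own question vector (\<lambda>i. fst (q i)) to an answer
  vector (nat => nat) with entries in the carrier of A at coordinates i < n.\<close>

definition valid_strategy :: "nat monoid \<Rightarrow> nat \<Rightarrow> ((nat \<Rightarrow> nat) \<Rightarrow> (nat \<Rightarrow> nat)) \<Rightarrow> bool" where
  "valid_strategy A n f \<longleftrightarrow> (\<forall>x i. i < n \<longrightarrow> f x i \<in> carrier A)"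

definition xor3_win_prob ::
  "nat monoid \<Rightarrow> (nat \<times> nat \<times> nat \<Rightarrow> nat) \<Rightarrow> (nat \<times> nat \<times> nat) pmf \<Rightarrow> nat
   \<Rightarrow> ((nat \<Rightarrow> nat) \<Rightarrow> (nat \<Rightarrow> nat)) \<Rightarrow> ((nat \<Rightarrow> nat) \<Rightarrow> (nat \<Rightarrow> nat))
   \<Rightarrow> ((nat \<Rightarrow> nat) \<Rightarrow> (nat \<Rightarrow> nat)) \<Rightarrow> real" where
  "xor3_win_prob A t \<mu> n f g h =
     measure_pmf.prob (Pi_pmf {..<n} undefined (\<lambda>_. \<mu>))
       {q. \<forall>i<n. f (\<lambda>j. fst (q j)) i \<otimes>\<^bsub>A\<^esub> g (\<lambda>j. fst (snd (q j))) i
                     \<otimes>\<^bsub>A\<^esub> h (\<lambda>j. snd (snd (q j))) i = t (q i)}"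

definition xor3_val ::
  "nat monoid \<Rightarrow> (nat \<times> nat \<times> nat \<Rightarrow> nat) \<Rightarrow> (nat \<times> nat \<times> nat) pmf \<Rightarrow> nat \<Rightarrow> real" where
  "xor3_val A t \<mu> n = Sup {xor3_win_prob A t \<mu> n f g h | f g h.
      valid_strategy A n f \<and> valid_strategy A n g \<and> valid_strategy A n h}"

end

theory Submission
  imports Defs
begin


lemma measure_bind_pmf':
  "measure_pmf.prob (bind_pmf M N) X = (\<integral>x. measure_pmf.prob (N x) X \<partial>measure_pmf M)"
  unfolding measure_pmf_bind
  by (subst measure_pmf.measure_bind[where N="count_space UNIV"])
     (auto simp: measure_pmf_in_subprob_algebra)

lemma mix_bind:
  fixes \<delta> :: real
  assumes "0 \<le> \<delta>" "\<delta> \<le> 1" "\<And>q. pmf \<mu> q = \<delta> * pmf \<mu>' q + (1 - \<delta>) * pmf \<nu> q"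
  shows "\<mu> = bind_pmf (bernoulli_pmf \<delta>) (\<lambda>b. if b then \<mu>' else \<nu>)"
  by (rule pmf_eqI) (simp add: pmf_bind assms mult.commute)

lemma exp1_ge: "exp (1::real) \<ge> 5/2"
  using exp_lower_Taylor_quadratic[of 1] by simp

lemma int_mono_bdd:
  fixes f g :: "'a \<Rightarrow> real"
  assumes "\<And>x. f x \<le> g x" "\<And>x. \<bar>f x\<bar> \<le> B" "\<And>x. \<bar>g x\<bar> \<le> B"
  shows "(\<integral>x. f x \<partial>measure_pmf M) \<le> (\<integral>x. g x \<partial>measure_pmf M)"
  by (intro integral_mono measure_pmf.integrable_const_bound[where B=B]) (auto simp: assms)

lemma map_pair_bind:
  "map_pmf F (pair_pmf X Y) = bind_pmf X (\<lambda>r. map_pmf (\<lambda>g. F (r, g)) Y)"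
  by (simp add: pair_pmf_def map_bind_pmf map_pmf_def bind_assoc_pmf bind_return_pmf)

definition win_set where
  "win_set A t n f g h = {q. \<forall>i<n. f (\<lambda>j. fst (q j)) i \<otimes>\<^bsub>A\<^esub> g (\<lambda>j. fst (snd (q j))) i
                     \<otimes>\<^bsub>A\<^esub> h (\<lambda>j. snd (snd (q j))) i = t (q i)}"

lemma val_bdd: "bdd_above {xor3_win_prob A t \<mu> n f g h | f g h.
      valid_strategy A n f \<and> valid_strategy A n g \<and> valid_strategy A n h}"
  by (rule bdd_aboveI[where M=1]) (auto simp: xor3_win_prob_def)

lemma val_upper:
  assumes "valid_strategy A n f" "valid_strategy A n g" "valid_strategy A n h"
  shows "xor3_win_prob A t \<mu> n f g h \<le> xor3_val A t \<mu> n"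
  unfolding xor3_val_def by (rule cSup_upper[OF _ val_bdd]) (use assms in blast)

lemma val_nonneg:
  assumes "group A"
  shows "0 \<le> xor3_val A t \<mu> n"
proof -
  have v: "valid_strategy A n (\<lambda>x i. \<one>\<^bsub>A\<^esub>)" using assms
    by (simp add: valid_strategy_def monoid.one_closed group.is_monoid)
  have "0 \<le> xor3_win_prob A t \<mu> n (\<lambda>x i. \<one>\<^bsub>A\<^esub>) (\<lambda>x i. \<one>\<^bsub>A\<^esub>) (\<lambda>x i. \<one>\<^bsub>A\<^esub>)"
    by (simp add: xor3_win_prob_def)
  also have "\<dots> \<le> xor3_val A t \<mu> n" by (rule val_upper[OF v v v])
  finally show ?thesis .
qed



lemma core:
  fixes D :: "nat \<Rightarrow> (nat \<times> nat \<times> nat) pmf"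
  assumes vf: "valid_strategy A n f" and vg: "valid_strategy A n g" and vh: "valid_strategy A n h"
    and I: "I \<subseteq> {..<n}" "card I = m" and DI: "\<And>i. i \<in> I \<Longrightarrow> D i = \<mu>'"
  shows "measure_pmf.prob (Pi_pmf {..<n} undefined D) (win_set A t n f g h) \<le> xor3_val A t \<mu>' m"
proof -
  define R where "R = {..<n} - I"
  have finI: "finite I" using I finite_subset by blast
  have finR: "finite R" by (simp add: R_def)
  have RI: "{..<n} = R \<union> I" "R \<inter> I = {}" using I by (auto simp: R_def)
  obtain e where e: "bij_betw e {0..<m} I"
    using ex_bij_betw_nat_finite[OF finI] I(2) by blast
  define hh where "hh x = (if x \<in> I then the_inv_into {0..<m} e x else m)" for x
  have hhe: "hh (e k) = k" if "k < m" for k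
    using e that by (auto simp: hh_def bij_betw_def the_inv_into_f_f)
  have ek: "e k \<in> I" if "k < m" for k using e that by (auto simp: bij_betw_def)
  have bhh: "bij_betw hh I {..<m}"
  proof -
    have "bij_betw (the_inv_into {0..<m} e) I {0..<m}"
      using e by (rule bij_betw_the_inv_into)
    then show ?thesis
      by (subst bij_betw_cong[where g="the_inv_into {0..<m} e"]) (auto simp: hh_def atLeast0LessThan)
  qed
  have PI: "Pi_pmf I undefined D = map_pmf (\<lambda>g. g \<circ> hh) (Pi_pmf {..<m} undefined (\<lambda>_. \<mu>'))"
  proof -
    have "Pi_pmf I undefined D = Pi_pmf I undefined (\<lambda>_. \<mu>')"
      by (intro Pi_pmf_cong) (auto simp: DI)
    also have "\<dots> = map_pmf (\<lambda>g. g \<circ> hh) (Pi_pmf {..<m} undefined (\<lambda>_. \<mu>'))"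
      by (rule Pi_pmf_bij_betw[OF finI bhh]) (auto simp: hh_def)
    finally show ?thesis .
  qed
  define merge where "merge = (\<lambda>(r::nat \<Rightarrow> nat \<times> nat \<times> nat, g::nat \<Rightarrow> nat \<times> nat \<times> nat) x. if x \<in> R then r x else g x)"
  have "Pi_pmf {..<n} undefined D = map_pmf merge (pair_pmf (Pi_pmf R undefined D) (Pi_pmf I undefined D))"
    unfolding RI(1) merge_def by (rule Pi_pmf_union[OF finR finI RI(2)])
  also have "\<dots> = bind_pmf (Pi_pmf R undefined D) (\<lambda>r. map_pmf (\<lambda>g. merge (r, g)) (Pi_pmf I undefined D))"
    by (rule map_pair_bind)
  finally have eq: "measure_pmf.prob (Pi_pmf {..<n} undefined D) (win_set A t n f g h) =
     (\<integral>r. measure_pmf.prob (Pi_pmf {..<m} undefined (\<lambda>_. \<mu>'))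
        ((\<lambda>g'. merge (r, g' \<circ> hh)) -` win_set A t n f g h) \<partial>measure_pmf (Pi_pmf R undefined D))"
    by (simp add: measure_bind_pmf' PI vimage_def)
  have bound: "measure_pmf.prob (Pi_pmf {..<m} undefined (\<lambda>_. \<mu>'))
        ((\<lambda>g'. merge (r, g' \<circ> hh)) -` win_set A t n f g h) \<le> xor3_val A t \<mu>' m" for r
  proof -
    define f' where "f' x' k = f (\<lambda>j. if j \<in> R then fst (r j) else x' (hh j)) (e k)" for x' k
    define g' where "g' x' k = g (\<lambda>j. if j \<in> R then fst (snd (r j)) else x' (hh j)) (e k)" for x' k
    define h' where "h' x' k = h (\<lambda>j. if j \<in> R then snd (snd (r j)) else x' (hh j)) (e k)" for x' k
    have v: "valid_strategy A m f'" "valid_strategy A m g'" "valid_strategy A m h'"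
      using vf vg vh ek I(1) unfolding valid_strategy_def f'_def g'_def h'_def by blast+
    have sub: "((\<lambda>g'. merge (r, g' \<circ> hh)) -` win_set A t n f g h) \<subseteq>
       {q. \<forall>i<m. f' (\<lambda>j. fst (q j)) i \<otimes>\<^bsub>A\<^esub> g' (\<lambda>j. fst (snd (q j))) i
                     \<otimes>\<^bsub>A\<^esub> h' (\<lambda>j. snd (snd (q j))) i = t (q i)}"
    proof (intro subsetI CollectI allI impI)
      fix q k assume q: "q \<in> (\<lambda>g'. merge (r, g' \<circ> hh)) -` win_set A t n f g h" and k: "k < m"
      have ekn: "e k < n" "e k \<notin> R" using ek[OF k] I(1) by (auto simp: R_def)
      have m1: "(\<lambda>j. fst (merge (r, q \<circ> hh) j)) = (\<lambda>j. if j \<in> R then fst (r j) else fst (q (hh j)))"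
        "(\<lambda>j. fst (snd (merge (r, q \<circ> hh) j))) = (\<lambda>j. if j \<in> R then fst (snd (r j)) else fst (snd (q (hh j))))"
        "(\<lambda>j. snd (snd (merge (r, q \<circ> hh) j))) = (\<lambda>j. if j \<in> R then snd (snd (r j)) else snd (snd (q (hh j))))"
        "merge (r, q \<circ> hh) (e k) = q k"
        using ekn hhe[OF k] by (auto simp: merge_def fun_eq_iff)
      from q ekn(1) have "f (\<lambda>j. fst (merge (r, q \<circ> hh) j)) (e k) \<otimes>\<^bsub>A\<^esub> g (\<lambda>j. fst (snd (merge (r, q \<circ> hh) j))) (e k)
                     \<otimes>\<^bsub>A\<^esub> h (\<lambda>j. snd (snd (merge (r, q \<circ> hh) j))) (e k) = t (merge (r, q \<circ> hh) (e k))"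
        by (simp add: win_set_def)
      then show "f' (\<lambda>j. fst (q j)) k \<otimes>\<^bsub>A\<^esub> g' (\<lambda>j. fst (snd (q j))) k
                     \<otimes>\<^bsub>A\<^esub> h' (\<lambda>j. snd (snd (q j))) k = t (q k)"
        unfolding m1 f'_def g'_def h'_def .
    qed
    have "measure_pmf.prob (Pi_pmf {..<m} undefined (\<lambda>_. \<mu>'))
        ((\<lambda>g'. merge (r, g' \<circ> hh)) -` win_set A t n f g h) \<le> xor3_win_prob A t \<mu>' m f' g' h'"
      unfolding xor3_win_prob_def by (rule measure_pmf.finite_measure_mono[OF sub]) simp
    also have "\<dots> \<le> xor3_val A t \<mu>' m" by (rule val_upper[OF v])
    finally show ?thesis .
  qed
  have "(\<integral>r. measure_pmf.prob (Pi_pmf {..<m} undefined (\<lambda>_. \<mu>'))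
        ((\<lambda>g'. merge (r, g' \<circ> hh)) -` win_set A t n f g h) \<partial>measure_pmf (Pi_pmf R undefined D))
     \<le> (\<integral>r. xor3_val A t \<mu>' m \<partial>measure_pmf (Pi_pmf R undefined D))"
    by (rule int_mono_bdd[where B="max 1 \<bar>xor3_val A t \<mu>' m\<bar>"]) (auto simp: bound intro!: order_trans[OF measure_pmf.prob_le_1])
  then show ?thesis by (simp add: eq)
qed



lemma prod_if_exp:
  fixes n :: nat shows "(\<Prod>i\<in>{..<n}. if B i then exp (-1) else (1::real)) = exp (- real (card {i\<in>{..<n}. B i}))"
proof -
  have "(\<Prod>i\<in>{..<n}. if B i then exp (-1) else (1::real)) = exp (-1) ^ card {i\<in>{..<n}. B i}"
    by (subst prod.If_cases[where P=B and h="\<lambda>_. exp (-1)" and g="\<lambda>_. 1::real" and A="{..<n}"])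
       (simp_all add: Int_def conj_commute)
  also have "\<dots> = exp (- real (card {i\<in>{..<n}. B i}))"
    by (simp add: exp_of_nat_mult[symmetric])
  finally show ?thesis .
qed

lemma chernoff:
  fixes \<delta> :: real
  assumes d: "0 < \<delta>" "\<delta> \<le> 1" and m: "real m \<le> \<delta> * real n / 2"
  shows "measure_pmf.prob (Pi_pmf {..<n} False (\<lambda>_. bernoulli_pmf \<delta>))
           {B. card {i\<in>{..<n}. B i} < m} \<le> 2 powr (- (1/10) * \<delta> * real n)"
proof -
  define P where "P = Pi_pmf {..<n} False (\<lambda>_. bernoulli_pmf \<delta>)"
  define S where "S = {B. card {i\<in>{..<n}. B i} < m}"
  define F where "F B = exp (\<delta> * real n / 2) * (\<Prod>i\<in>{..<n}. if B i then exp (-1) else (1::real))" for B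
  have F_eq: "F B = exp (\<delta> * real n / 2) * exp (- real (card {i\<in>{..<n}. B i}))" for B
    by (simp add: F_def prod_if_exp)
  have ind: "indicator S B \<le> F B" for B
  proof (cases "B \<in> S")
    case True
    then have "real (card {i\<in>{..<n}. B i}) \<le> \<delta> * real n / 2" using m by (simp add: S_def)
    then have "1 \<le> exp (\<delta> * real n / 2) * exp (- real (card {i\<in>{..<n}. B i}))"
      by (simp add: exp_add[symmetric])
    then show ?thesis using True by (simp add: F_eq)
  qed (simp add: F_eq)
  have Fb: "\<bar>F B\<bar> \<le> exp (\<delta> * real n / 2)" for B
  proof -
    have "0 \<le> (\<Prod>i\<in>{..<n}. if B i then exp (-1) else (1::real))" by (intro prod_nonneg) simp
    moreover have "(\<Prod>i\<in>{..<n}. if B i then exp (-1) else (1::real)) \<le> 1" by (intro prod_le_1) auto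
    ultimately show ?thesis unfolding F_def by (simp add: abs_mult mult_left_le)
  qed
  have "measure_pmf.prob P S = (\<integral>B. indicator S B \<partial>measure_pmf P)" by simp
  also have "\<dots> \<le> (\<integral>B. F B \<partial>measure_pmf P)"
    by (rule int_mono_bdd[where B="max 1 (exp (\<delta> * real n / 2))"])
       (use ind in \<open>auto simp: indicator_def intro: order_trans[OF Fb]\<close>)
  also have "\<dots> = exp (\<delta> * real n / 2) * (\<integral>B. (\<Prod>i\<in>{..<n}. if B i then exp (-1) else (1::real)) \<partial>measure_pmf P)"
    by (simp add: F_def)
  also have "(\<integral>B. (\<Prod>i\<in>{..<n}. if B i then exp (-1) else (1::real)) \<partial>measure_pmf P)
      = (\<Prod>i\<in>{..<n}. (\<integral>b. (if b then exp (-1) else (1::real)) \<partial>measure_pmf (bernoulli_pmf \<delta>)))"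
    unfolding P_def
    by (rule expectation_prod_Pi_pmf[where f="\<lambda>_ b. if b then exp (-1) else (1::real)"])
       (auto intro: integrable_measure_pmf_finite)
  also have "\<dots> = (1 - \<delta> * (1 - exp (-1))) ^ n"
    using d by (simp add: algebra_simps)
  also have "\<dots> \<le> exp (- (\<delta> * (1 - exp (-1)))) ^ n"
  proof (rule power_mono)
    have "exp (-1) \<le> (1::real)" by simp
    then show "0 \<le> 1 - \<delta> * (1 - exp (-1))" using d
      by (smt (verit, best) exp_gt_zero mult_left_le mult_nonneg_nonneg)
  qed (rule order_trans[OF _ exp_ge_add_one_self], simp)
  also have "\<dots> = exp (- (\<delta> * (1 - exp (-1))) * real n)"
    by (simp add: exp_of_nat_mult[symmetric] mult.commute)
  finally have "measure_pmf.prob P S \<le> exp (\<delta> * real n / 2) * exp (- (\<delta> * (1 - exp (-1))) * real n)"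
    by (simp add: mult_left_mono)
  also have "\<dots> = exp (- (\<delta> * real n) * (1/2 - exp (-1)))"
    by (simp add: exp_add[symmetric] algebra_simps)
  also have "\<dots> \<le> exp (- (\<delta> * real n) * (1/10) * ln 2)"
  proof -
    have e: "exp (-1) \<le> (2/5::real)"
      using exp1_ge by (simp add: exp_minus field_simps)
    have l: "ln 2 \<le> (1::real)" using ln_2_less_1 by simp
    have "(1/10) * ln 2 \<le> (1/2 - exp (-1::real))" using e l by simp
    moreover have "0 \<le> \<delta> * real n" using d by simp
    ultimately show ?thesis
      using d by (simp add: mult.assoc) (intro mult_left_mono, simp_all)
  qed
  also have "\<dots> = 2 powr (- (1/10) * \<delta> * real n)"
    by (simp add: powr_def algebra_simps)
  finally show ?thesis by (simp add: P_def S_def)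
qed



lemma val_le:
  assumes "group A"
    and "\<And>f g h. valid_strategy A n f \<Longrightarrow> valid_strategy A n g \<Longrightarrow> valid_strategy A n h
           \<Longrightarrow> xor3_win_prob A t \<mu> n f g h \<le> X"
  shows "xor3_val A t \<mu> n \<le> X"
proof -
  have v: "valid_strategy A n (\<lambda>x i. \<one>\<^bsub>A\<^esub>)" using assms(1)
    by (simp add: valid_strategy_def monoid.one_closed group.is_monoid)
  show ?thesis unfolding xor3_val_def
    by (rule cSup_least) (use v assms(2) in blast)+
qed

theorem lemma2p5:
  shows "\<exists>c>0. \<forall>(S::nat set) (G::nat set) (P::nat set) (A::nat monoid)
      (\<mu>::(nat \<times> nat \<times> nat) pmf) \<mu>' \<nu> (\<delta>::real) (t::nat \<times> nat \<times> nat \<Rightarrow> nat) (n::nat).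
      finite S \<and> finite G \<and> finite P \<and>
      comm_group A \<and> finite (carrier A) \<and>
      set_pmf \<mu>' \<subseteq> S \<times> G \<times> P \<and> set_pmf \<nu> \<subseteq> S \<times> G \<times> P \<and>
      0 < \<delta> \<and> \<delta> \<le> 1 \<and>
      (\<forall>q. pmf \<mu> q = \<delta> * pmf \<mu>' q + (1 - \<delta>) * pmf \<nu> q) \<and>
      (\<forall>q\<in>set_pmf \<mu>. t q \<in> carrier A)
      \<longrightarrow> xor3_val A t \<mu> n
          \<le> xor3_val A t \<mu>' (nat \<lfloor>\<delta> * real n / 2\<rfloor>) + 2 powr (- c * \<delta> * real n)"
proof (intro exI[where x="1/10::real"] conjI allI impI)
  fix S G P :: "nat set" and A :: "nat monoid" and \<mu> \<mu>' \<nu> :: "(nat \<times> nat \<times> nat) pmf"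
    and \<delta> :: real and t :: "nat \<times> nat \<times> nat \<Rightarrow> nat" and n :: nat
  assume H: "finite S \<and> finite G \<and> finite P \<and>
      comm_group A \<and> finite (carrier A) \<and>
      set_pmf \<mu>' \<subseteq> S \<times> G \<times> P \<and> set_pmf \<nu> \<subseteq> S \<times> G \<times> P \<and>
      0 < \<delta> \<and> \<delta> \<le> 1 \<and>
      (\<forall>q. pmf \<mu> q = \<delta> * pmf \<mu>' q + (1 - \<delta>) * pmf \<nu> q) \<and>
      (\<forall>q\<in>set_pmf \<mu>. t q \<in> carrier A)"
  then have grp: "group A" and d: "0 < \<delta>" "\<delta> \<le> 1"
    and mix: "\<And>q. pmf \<mu> q = \<delta> * pmf \<mu>' q + (1 - \<delta>) * pmf \<nu> q"
    by (auto simp: comm_group_def)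
  define m where "m = nat \<lfloor>\<delta> * real n / 2\<rfloor>"
  define V where "V = xor3_val A t \<mu>' m"
  define K where "K b = (if b then \<mu>' else \<nu>)" for b
  define PB where "PB = Pi_pmf {..<n} False (\<lambda>_. bernoulli_pmf \<delta>)"
  define Sm where "Sm = {B. card {i\<in>{..<n}. B i} < m}"
  have V0: "0 \<le> V" unfolding V_def by (rule val_nonneg[OF grp])
  have mle: "real m \<le> \<delta> * real n / 2"
  proof -
    have f0: "0 \<le> \<lfloor>\<delta> * real n / 2\<rfloor>" using d by simp
    show ?thesis unfolding m_def by (subst of_nat_nat[OF f0]) (rule of_int_floor_le)
  qed
  have ch: "measure_pmf.prob PB Sm \<le> 2 powr (- (1/10) * \<delta> * real n)"
    unfolding PB_def Sm_def by (rule chernoff[OF d mle])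
  have mu: "\<mu> = bind_pmf (bernoulli_pmf \<delta>) K"
    unfolding K_def by (rule mix_bind) (use d mix in auto)
  have Pi_eq: "Pi_pmf {..<n} undefined (\<lambda>_. \<mu>) = bind_pmf PB (\<lambda>B. Pi_pmf {..<n} undefined (\<lambda>i. K (B i)))"
    unfolding mu PB_def
    by (rule Pi_pmf_bind[where p="\<lambda>_. bernoulli_pmf \<delta>" and q="\<lambda>_. K" and d'=False]) simp
  have "xor3_win_prob A t \<mu> n f g h \<le> V + 2 powr (- (1/10) * \<delta> * real n)"
    if vf: "valid_strategy A n f" and vg: "valid_strategy A n g" and vh: "valid_strategy A n h" for f g h
  proof -
    have pw: "measure_pmf.prob (Pi_pmf {..<n} undefined (\<lambda>i. K (B i))) (win_set A t n f g h)
              \<le> V + indicator Sm B" for B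
    proof (cases "B \<in> Sm")
      case True
      then show ?thesis using V0 by (simp add: measure_pmf.prob_le_1 add_increasing)
    next
      case False
      then have "m \<le> card {i\<in>{..<n}. B i}" by (simp add: Sm_def)
      then obtain I where I: "I \<subseteq> {i\<in>{..<n}. B i}" "card I = m"
        by (rule obtain_subset_with_card_n)
      have "measure_pmf.prob (Pi_pmf {..<n} undefined (\<lambda>i. K (B i))) (win_set A t n f g h) \<le> V"
        unfolding V_def by (rule core[OF vf vg vh, where I=I]) (use I in \<open>auto simp: K_def\<close>)
      then show ?thesis using False by simp
    qed
    have "xor3_win_prob A t \<mu> n f g h
        = (\<integral>B. measure_pmf.prob (Pi_pmf {..<n} undefined (\<lambda>i. K (B i))) (win_set A t n f g h) \<partial>measure_pmf PB)"
      unfolding xor3_win_prob_def Pi_eq measure_bind_pmf' win_set_def ..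
    also have "\<dots> \<le> (\<integral>B. V + indicator Sm B \<partial>measure_pmf PB)"
      by (rule int_mono_bdd[where B="V + 1"]) (use pw V0 in \<open>auto simp: indicator_def intro!: order_trans[OF measure_pmf.prob_le_1]\<close>)
    also have "\<dots> = V + measure_pmf.prob PB Sm"
      by (subst Bochner_Integration.integral_add) (auto intro!: integrable_real_indicator simp: measure_pmf.emeasure_finite less_top[symmetric])
    also have "\<dots> \<le> V + 2 powr (- (1/10) * \<delta> * real n)" using ch by simp
    finally show ?thesis .
  qed
  then show "xor3_val A t \<mu> n \<le> xor3_val A t \<mu>' (nat \<lfloor>\<delta> * real n / 2\<rfloor>) + 2 powr (- (1/10) * \<delta> * real n)"
    unfolding V_def m_def by (intro val_le[OF grp]) auto
qed simp

end
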